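(* Let $\mathcal M$ satisfy sufficient demand and let $(X^*,p^* )$ be a market equilibrium of $\mathcal M$. Then for every agent $i\in A$ and every optimal solution $(\beta_i,\gamma_i)$ of the dual of OB-LP$(i)$ at prices $p^*$, we have $\gamma_i>0$. Consequently $\sum_j p^*_jx^*_{ij}=m_i$ for every $i\in A$.
   Context: A market $\mathcal M$ consists of a finite set $A$ of agents, a finite set $G$ of divisible goods, each with supply $1$, and a finite index set $C$. Each agent $i$ has real coefficients $a_{ijk}$, requirements $r_{ik}\ge0$, delays $d_{ij}\ge 0$, budget $m_i>0$. CC$(i)$: $\sum_{j}a_{ijk}x_{ij}\ge r_{ik}$ for all $k$, $x_{ij}\ge0$. $X$ is supply respecting if $\sum_i x_{ij}\le1$ for all $j$. $(X,p)$ is a market equilibrium if $X$ is supply respecting, each $\mathbf x_i$ is an optimal solution of OB-LP$(i)$ at $p$, and $\sum_i x_{ij}<1\Rightarrow p_j=0$. OB-LP$(i)$ at prices $p$ is: minimize $\sum_j d_{ij}x_{ij}$ s.t. CC$(i)$ and $\sum_jp_jx_{ij}\le m_i$. Its dual has variables $\beta_{ik}\ge0$ ($k\in C$) for the covering constraints and $\gamma_i\ge0$ for the budget constraint: maximize $\sum_k r_{ik}\beta_{ik}-m_i\gamma_i$ s.t. $d_{ij}\ge\sum_k a_{ijk}\beta_{ik}-\gamma_ip_j$ for all $j$. $\mathcal M$ satisfies sufficient demand if for every agent $i$, every optimal solution of "minimize $\sum_j d_{ij}x_{ij}$ s.t. CC$(i)$" has some good $j$ with $x_{ij}>1$. *)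

theory Defs
  imports "HOL-Analysis.Analysis"
begin

text \<open>Market: agents A, goods G, covering-constraint index set C (all finite),
  coefficients a i j k, requirements r i k, delays d i j, budgets m i.
  Allocations X i j, prices p j.\<close>

definition CC :: "'g set \<Rightarrow> 'c set \<Rightarrow> ('a \<Rightarrow> 'g \<Rightarrow> 'c \<Rightarrow> real) \<Rightarrow> ('a \<Rightarrow> 'c \<Rightarrow> real)
    \<Rightarrow> 'a \<Rightarrow> ('g \<Rightarrow> real) \<Rightarrow> bool" where
  "CC G C a r i x \<longleftrightarrow>
     (\<forall>k\<in>C. (\<Sum>j\<in>G. a i j k * x j) \<ge> r i k) \<and> (\<forall>j\<in>G. x j \<ge> 0)"

definition supply_respecting :: "'a set \<Rightarrow> 'g set \<Rightarrow> ('a \<Rightarrow> 'g \<Rightarrow> real) \<Rightarrow> bool" where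
  "supply_respecting A G X \<longleftrightarrow> (\<forall>j\<in>G. (\<Sum>i\<in>A. X i j) \<le> 1)"

definition OB_feasible where
  "OB_feasible G C a r m i p x \<longleftrightarrow> CC G C a r i x \<and> (\<Sum>j\<in>G. p j * x j) \<le> m i"

definition OB_optimal :: "'g set \<Rightarrow> 'c set \<Rightarrow> ('a \<Rightarrow> 'g \<Rightarrow> 'c \<Rightarrow> real) \<Rightarrow> ('a \<Rightarrow> 'c \<Rightarrow> real)
    \<Rightarrow> ('a \<Rightarrow> 'g \<Rightarrow> real) \<Rightarrow> ('a \<Rightarrow> real) \<Rightarrow> 'a \<Rightarrow> ('g \<Rightarrow> real) \<Rightarrow> ('g \<Rightarrow> real) \<Rightarrow> bool" where
  "OB_optimal G C a r d m i p x \<longleftrightarrow>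
     OB_feasible G C a r m i p x \<and>
     (\<forall>y. OB_feasible G C a r m i p y \<longrightarrow> (\<Sum>j\<in>G. d i j * x j) \<le> (\<Sum>j\<in>G. d i j * y j))"

definition dual_feasible where
  "dual_feasible G C a d i p \<beta> \<gamma> \<longleftrightarrow>
     (\<forall>k\<in>C. \<beta> k \<ge> 0) \<and> \<gamma> \<ge> 0 \<and>
     (\<forall>j\<in>G. d i j \<ge> (\<Sum>k\<in>C. a i j k * \<beta> k) - \<gamma> * p j)"

definition dual_obj :: "'c set \<Rightarrow> ('a \<Rightarrow> 'c \<Rightarrow> real) \<Rightarrow> ('a \<Rightarrow> real) \<Rightarrow> 'a \<Rightarrow> ('c \<Rightarrow> real) \<Rightarrow> real \<Rightarrow> real" where
  "dual_obj C r m i \<beta> \<gamma> = (\<Sum>k\<in>C. r i k * \<beta> k) - m i * \<gamma>"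

definition dual_optimal :: "'g set \<Rightarrow> 'c set \<Rightarrow> ('a \<Rightarrow> 'g \<Rightarrow> 'c \<Rightarrow> real) \<Rightarrow> ('a \<Rightarrow> 'c \<Rightarrow> real)
    \<Rightarrow> ('a \<Rightarrow> 'g \<Rightarrow> real) \<Rightarrow> ('a \<Rightarrow> real) \<Rightarrow> 'a \<Rightarrow> ('g \<Rightarrow> real) \<Rightarrow> ('c \<Rightarrow> real) \<Rightarrow> real \<Rightarrow> bool" where
  "dual_optimal G C a r d m i p \<beta> \<gamma> \<longleftrightarrow>
     dual_feasible G C a d i p \<beta> \<gamma> \<and>
     (\<forall>\<beta>' \<gamma>'. dual_feasible G C a d i p \<beta>' \<gamma>' \<longrightarrow> dual_obj C r m i \<beta>' \<gamma>' \<le> dual_obj C r m i \<beta> \<gamma>)"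

definition market_equilibrium where
  "market_equilibrium A G C a r d m X p \<longleftrightarrow>
     supply_respecting A G X \<and>
     (\<forall>i\<in>A. OB_optimal G C a r d m i p (X i)) \<and>
     (\<forall>j\<in>G. (\<Sum>i\<in>A. X i j) < 1 \<longrightarrow> p j = 0)"

definition CC_optimal where
  "CC_optimal G C a r d i x \<longleftrightarrow>
     CC G C a r i x \<and> (\<forall>y. CC G C a r i y \<longrightarrow> (\<Sum>j\<in>G. d i j * x j) \<le> (\<Sum>j\<in>G. d i j * y j))"

definition sufficient_demand where
  "sufficient_demand A G C a r d \<longleftrightarrow>
     (\<forall>i\<in>A. \<forall>x. CC_optimal G C a r d i x \<longrightarrow> (\<exists>j\<in>G. x j > 1))"

end

theory Submission
  imports Defs
begin


datatype 'r idx = Leaf 'r | Keep "'r idx" | Pair "'r idx" "'r idx"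

lemma fm_transfer:
  fixes I :: "'r idx set" and A :: "'r idx \<Rightarrow> 'v \<Rightarrow> real"
  assumes fin: "finite I"
    and P: "P = {i\<in>I. A i u > 0}" and N: "N = {i\<in>I. A i u < 0}" and Z: "Z = {i\<in>I. A i u = 0}"
  shows "(\<Sum>i\<in>I. (if i \<in> Z then l (Keep i) else if i \<in> P then (\<Sum>n\<in>N. l (Pair i n) * (- A n u))
            else if i\<in>N then (\<Sum>p\<in>P. l (Pair p i) * A p u) else 0) * g i)
     = (\<Sum>k\<in>Keep ` Z \<union> (\<lambda>(p,n). Pair p n) ` (P \<times> N). l k * (case k of Keep i \<Rightarrow> g i
            | Pair p n \<Rightarrow> (- A n u) * g p + A p u * g n | Leaf r \<Rightarrow> 0))"
proof -
  have fP: "finite P" and fN: "finite N" and fZ: "finite Z" using fin P N Z by auto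
  have I: "I = Z \<union> P \<union> N" using P N Z by auto
  have d1: "Z \<inter> P = {}" "(Z \<union> P) \<inter> N = {}" using P N Z by auto
  have "(\<Sum>i\<in>I. (if i \<in> Z then l (Keep i) else if i \<in> P then (\<Sum>n\<in>N. l (Pair i n) * (- A n u))
            else if i\<in>N then (\<Sum>p\<in>P. l (Pair p i) * A p u) else 0) * g i)
     = (\<Sum>i\<in>Z. l (Keep i) * g i) + (\<Sum>i\<in>P. (\<Sum>n\<in>N. l (Pair i n) * (- A n u)) * g i)
       + (\<Sum>i\<in>N. (\<Sum>p\<in>P. l (Pair p i) * A p u) * g i)"
    unfolding I
    apply (subst sum.union_disjoint[OF _ fN d1(2)], use fZ fP in simp, simp)
    apply (subst sum.union_disjoint[OF fZ fP d1(1)])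
    apply (intro arg_cong2[where f="(+)"] sum.cong refl)
    using d1 by auto
  also have "\<dots> = (\<Sum>i\<in>Z. l (Keep i) * g i) + (\<Sum>(p,n)\<in>P\<times>N. l (Pair p n) * ((- A n u) * g p + A p u * g n))"
  proof -
    have "(\<Sum>(p,n)\<in>P\<times>N. l (Pair p n) * ((- A n u) * g p + A p u * g n))
        = (\<Sum>(p,n)\<in>P\<times>N. l (Pair p n) * (- A n u) * g p) + (\<Sum>(p,n)\<in>P\<times>N. l (Pair p n) * A p u * g n)"
      by (simp add: sum.distrib[symmetric] case_prod_beta algebra_simps)
    also have "(\<Sum>(p,n)\<in>P\<times>N. l (Pair p n) * (- A n u) * g p) = (\<Sum>i\<in>P. (\<Sum>n\<in>N. l (Pair i n) * (- A n u)) * g i)"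
      by (simp add: sum.cartesian_product[symmetric] sum_distrib_right)
    also have "(\<Sum>(p,n)\<in>P\<times>N. l (Pair p n) * A p u * g n) = (\<Sum>i\<in>N. (\<Sum>p\<in>P. l (Pair p i) * A p u) * g i)"
      by (simp add: sum.cartesian_product[symmetric] sum_distrib_right sum.swap[of _ P N])
    finally show ?thesis by simp
  qed
  also have "\<dots> = (\<Sum>k\<in>Keep ` Z \<union> (\<lambda>(p,n). Pair p n) ` (P \<times> N). l k * (case k of Keep i \<Rightarrow> g i
            | Pair p n \<Rightarrow> (- A n u) * g p + A p u * g n | Leaf r \<Rightarrow> 0))"
    apply (subst sum.union_disjoint)
       apply (use fZ fP fN in auto)[3]
    apply (subst sum.reindex, simp add: inj_on_def)
    apply (subst sum.reindex, simp add: inj_on_def)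
    apply (simp add: case_prod_beta)
    done
  finally show ?thesis .
qed



lemma farkas_fm:
  fixes V :: "'v set"
  assumes "finite V"
  shows "\<And>(I :: 'r idx set) (A :: 'r idx \<Rightarrow> 'v \<Rightarrow> real) (b :: 'r idx \<Rightarrow> real). finite I \<Longrightarrow> \<not>(\<exists>x. \<forall>i\<in>I. (\<Sum>v\<in>V. A i v * x v) \<ge> b i) \<Longrightarrow>
     \<exists>l. (\<forall>i\<in>I. l i \<ge> 0) \<and> (\<forall>v\<in>V. (\<Sum>i\<in>I. l i * A i v) = 0) \<and> (\<Sum>i\<in>I. l i * b i) > 0"
  using assms
proof (induction V rule: finite_induct)
  case empty
  have "\<exists>i\<in>I. b i > 0" using empty(2) by (simp add: not_le)
  then obtain i where i: "i \<in> I" "b i > 0" by blast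
  show ?case
    by (rule exI[of _ "\<lambda>j. if j = i then 1 else 0"]) (use i empty in \<open>simp add: sum.delta mult_if_delta\<close>)
next
  case (insert u V I A b)
  define P where "P = {i\<in>I. A i u > 0}"
  define N where "N = {i\<in>I. A i u < 0}"
  define Z where "Z = {i\<in>I. A i u = 0}"
  define I' where "I' = Keep ` Z \<union> (\<lambda>(p,n). Pair p n) ` (P \<times> N)"
  define A' where "A' = (\<lambda>k. case k of Keep i \<Rightarrow> A i
            | Pair p n \<Rightarrow> (\<lambda>v. (- A n u) * A p v + A p u * A n v) | Leaf r \<Rightarrow> (\<lambda>v. 0))"
  define b' where "b' = (\<lambda>k. case k of Keep i \<Rightarrow> b i
            | Pair p n \<Rightarrow> (- A n u) * b p + A p u * b n | Leaf r \<Rightarrow> 0)"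
  have fP: "finite P" and fN: "finite N" and fZ: "finite Z" using insert P_def N_def Z_def by auto
  have fI': "finite I'" unfolding I'_def using fP fN fZ by auto
  have infeas: "\<not>(\<exists>x. \<forall>i\<in>I'. (\<Sum>v\<in>V. A' i v * x v) \<ge> b' i)"
  proof
    assume "\<exists>x. \<forall>i\<in>I'. (\<Sum>v\<in>V. A' i v * x v) \<ge> b' i"
    then obtain x where x: "\<forall>i\<in>I'. (\<Sum>v\<in>V. A' i v * x v) \<ge> b' i" by blast
    define s where "s i = (\<Sum>v\<in>V. A i v * x v)" for i
    define t where "t i = (b i - s i) / A i u" for i
    have xZ: "s i \<ge> b i" if "i \<in> Z" for i
      using x[rule_format, of "Keep i"] that unfolding I'_def A'_def b'_def s_def by auto
    have tPN: "t p \<le> t n" if "p \<in> P" "n \<in> N" for p n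
    proof -
      have "(\<Sum>v\<in>V. A' (Pair p n) v * x v) \<ge> b' (Pair p n)"
        using x[rule_format, of "Pair p n"] that unfolding I'_def by auto
      also have "(\<Sum>v\<in>V. A' (Pair p n) v * x v) = (- A n u) * s p + A p u * s n"
      proof -
        have "(\<Sum>v\<in>V. A' (Pair p n) v * x v) = (\<Sum>v\<in>V. (- A n u) * (A p v * x v) + A p u * (A n v * x v))"
          unfolding A'_def by (intro sum.cong refl) (simp add: algebra_simps)
        also have "\<dots> = (- A n u) * (\<Sum>v\<in>V. A p v * x v) + A p u * (\<Sum>v\<in>V. A n v * x v)"
          by (simp only: sum.distrib sum_distrib_left)
        finally show ?thesis unfolding s_def .
      qed
      finally have h: "(- A n u) * b p + A p u * b n \<le> (- A n u) * s p + A p u * s n"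
        unfolding b'_def by simp
      have a: "A p u > 0" and c: "A n u < 0" using that P_def N_def by auto
      show ?thesis unfolding t_def using a c h
        by (simp add: divide_simps) (simp add: algebra_simps)
    qed
    define xu where "xu = (if P = {} then (if N = {} then 0 else Min (t ` N)) else Max (t ` P))"
    have xuP: "A i u * xu \<ge> b i - s i" if "i \<in> P" for i
    proof -
      have "t i \<le> xu" using that fP unfolding xu_def by auto
      moreover have "A i u > 0" using that P_def by auto
      ultimately show ?thesis unfolding t_def by (simp add: divide_simps mult.commute)
    qed
    have xuN: "A i u * xu \<ge> b i - s i" if "i \<in> N" for i
    proof -
      have "xu \<le> t i"
      proof (cases "P = {}")
        case True thus ?thesis using that fN unfolding xu_def by auto
      next
        case False
        then have "Max (t ` P) \<in> t ` P" using fP by auto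
        then obtain p where "p \<in> P" "Max (t ` P) = t p" by auto
        thus ?thesis using tPN[OF _ that] False unfolding xu_def by auto
      qed
      moreover have "A i u < 0" using that N_def by auto
      ultimately show ?thesis unfolding t_def by (simp add: divide_simps mult.commute)
    qed
    have "\<forall>i\<in>I. (\<Sum>v\<in>insert u V. A i v * (x(u := xu)) v) \<ge> b i"
    proof
      fix i assume i: "i \<in> I"
      have e: "(\<Sum>v\<in>insert u V. A i v * (x(u := xu)) v) = A i u * xu + s i"
        unfolding s_def using insert(1,2)
        by (simp add: sum.insert) (intro sum.cong, auto)
      have "i \<in> Z \<or> i \<in> P \<or> i \<in> N" using i Z_def P_def N_def by auto
      thus "(\<Sum>v\<in>insert u V. A i v * (x(u := xu)) v) \<ge> b i"
        unfolding e using xZ[of i] xuP[of i] xuN[of i] Z_def i by (auto simp: algebra_simps)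
    qed
    thus False using insert.prems(2) by blast
  qed
  obtain l' where l': "\<forall>i\<in>I'. l' i \<ge> 0" "\<forall>v\<in>V. (\<Sum>i\<in>I'. l' i * A' i v) = 0" "(\<Sum>i\<in>I'. l' i * b' i) > 0"
    using insert.IH[OF fI' infeas] by blast
  define l where "l i = (if i \<in> Z then l' (Keep i) else if i \<in> P then (\<Sum>n\<in>N. l' (Pair i n) * (- A n u))
            else if i\<in>N then (\<Sum>p\<in>P. l' (Pair p i) * A p u) else 0)" for i
  have tr: "(\<Sum>i\<in>I. l i * g i) = (\<Sum>k\<in>I'. l' k * (case k of Keep i \<Rightarrow> g i
            | Pair p n \<Rightarrow> (- A n u) * g p + A p u * g n | Leaf r \<Rightarrow> 0))" for g
    unfolding l_def I'_def by (rule fm_transfer[where A=A and u=u, OF insert.prems(1) P_def N_def Z_def])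
  have nn: "\<forall>i\<in>I. l i \<ge> 0"
  proof
    fix i assume "i \<in> I"
    have kz: "l' (Keep i) \<ge> 0" if "i \<in> Z" using l'(1) that unfolding I'_def by auto
    have lp: "l' (Pair p n) \<ge> 0" if "p \<in> P" "n \<in> N" for p n
      using l'(1) that unfolding I'_def by force
    have kp: "(\<Sum>n\<in>N. l' (Pair i n) * (- A n u)) \<ge> 0" if "i \<in> P"
      using lp that unfolding N_def by (intro sum_nonneg) (simp add: mult_nonneg_nonpos)
    have kn: "(\<Sum>p\<in>P. l' (Pair p i) * A p u) \<ge> 0" if "i \<in> N"
      using lp that unfolding P_def by (intro sum_nonneg) simp
    show "l i \<ge> 0" unfolding l_def using kz kp kn by auto
  qed
  have cb: "(\<Sum>i\<in>I. l i * b i) > 0"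
    unfolding tr using l'(3) unfolding b'_def .
  have cv: "(\<Sum>i\<in>I. l i * A i v) = 0" if "v \<in> insert u V" for v
  proof (cases "v = u")
    case True
    have "(\<Sum>i\<in>I. l i * A i v) = (\<Sum>k\<in>I'. l' k * 0)"
      unfolding tr True by (intro sum.cong refl) (auto simp: I'_def Z_def)
    thus ?thesis by simp
  next
    case False
    hence "v \<in> V" using that by auto
    have "(\<Sum>i\<in>I. l i * A i v) = (\<Sum>k\<in>I'. l' k * A' k v)"
      unfolding tr by (intro sum.cong refl) (auto simp: I'_def A'_def)
    thus ?thesis using l'(2) \<open>v \<in> V\<close> by simp
  qed
  show ?case using nn cb cv by blast
qed



datatype ('c,'g) row = Cov 'c | Nng 'g | Bud | Obj

lemma row_sum:
  assumes "finite C" "finite G"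
  shows "(\<Sum>\<rho>\<in>Cov ` C \<union> Nng ` G \<union> {Bud, Obj}. f \<rho>)
     = (\<Sum>k\<in>C. f (Cov k)) + (\<Sum>j\<in>G. f (Nng j)) + f Bud + f Obj"
proof -
  have "(\<Sum>\<rho>\<in>Cov ` C \<union> Nng ` G \<union> {Bud, Obj}. f \<rho>)
      = (\<Sum>\<rho>\<in>Cov ` C. f \<rho>) + (\<Sum>\<rho>\<in>Nng ` G. f \<rho>) + (\<Sum>\<rho>\<in>{Bud, Obj}. f \<rho>)"
    using assms by (subst sum.union_disjoint; auto)+
  also have "\<dots> = (\<Sum>k\<in>C. f (Cov k)) + (\<Sum>j\<in>G. f (Nng j)) + f Bud + f Obj"
    by (simp add: sum.reindex inj_on_def add.assoc)
  finally show ?thesis .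
qed

lemma weak_farkas:
  fixes l b :: "'i \<Rightarrow> real" and A :: "'i \<Rightarrow> 'v \<Rightarrow> real"
  assumes "finite I" "finite V"
    and "\<forall>i\<in>I. l i \<ge> 0 \<and> (l i \<noteq> 0 \<longrightarrow> b i \<le> (\<Sum>v\<in>V. A i v * x v))"
    and "\<forall>v\<in>V. (\<Sum>i\<in>I. l i * A i v) = 0"
  shows "(\<Sum>i\<in>I. l i * b i) \<le> 0"
proof -
  have "(\<Sum>i\<in>I. l i * b i) \<le> (\<Sum>i\<in>I. l i * (\<Sum>v\<in>V. A i v * x v))"
  proof (rule sum_mono)
    fix i assume "i \<in> I"
    with assms(3) show "l i * b i \<le> l i * (\<Sum>v\<in>V. A i v * x v)"
      by (cases "l i = 0") (auto intro: mult_left_mono)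
  qed
  also have "\<dots> = (\<Sum>v\<in>V. x v * (\<Sum>i\<in>I. l i * A i v))"
    by (simp add: sum_distrib_left sum.swap[of _ I V] algebra_simps)
  also have "\<dots> = 0" using assms(4) by simp
  finally show ?thesis .
qed



lemma sum_comb:
  fixes c x y :: "'g \<Rightarrow> real"
  shows "(\<Sum>j\<in>G. c j * (x j + t * (y j - x j))) = (\<Sum>j\<in>G. c j * x j) + t * ((\<Sum>j\<in>G. c j * y j) - (\<Sum>j\<in>G. c j * x j))"
proof -
  have "(\<Sum>j\<in>G. c j * (x j + t * (y j - x j))) = (\<Sum>j\<in>G. c j * x j + t * (c j * y j) - t * (c j * x j))"
    by (intro sum.cong refl) (simp add: algebra_simps)
  thus ?thesis by (simp add: sum.distrib sum_subtractf sum_distrib_left algebra_simps)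
qed

theorem lemmaE1:
  fixes A :: "'a set" and G :: "'g set" and C :: "'c set"
    and a :: "'a \<Rightarrow> 'g \<Rightarrow> 'c \<Rightarrow> real" and r :: "'a \<Rightarrow> 'c \<Rightarrow> real"
    and d :: "'a \<Rightarrow> 'g \<Rightarrow> real" and m :: "'a \<Rightarrow> real"
    and X :: "'a \<Rightarrow> 'g \<Rightarrow> real" and p :: "'g \<Rightarrow> real"
  assumes "finite A" and "finite G" and "finite C"
    and "\<forall>i\<in>A. \<forall>k\<in>C. r i k \<ge> 0"
    and "\<forall>i\<in>A. \<forall>j\<in>G. d i j \<ge> 0"
    and "\<forall>i\<in>A. m i > 0"
    and "sufficient_demand A G C a r d"
    and "market_equilibrium A G C a r d m X p"
  shows "(\<forall>i\<in>A. \<forall>\<beta> \<gamma>. dual_optimal G C a r d m i p \<beta> \<gamma> \<longrightarrow> \<gamma> > 0)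
       \<and> (\<forall>i\<in>A. (\<Sum>j\<in>G. p j * X i j) = m i)"
proof -
  note fA = assms(1) and fG = assms(2) and fC = assms(3)
  have sr: "supply_respecting A G X" and opt: "\<And>i. i \<in> A \<Longrightarrow> OB_optimal G C a r d m i p (X i)"
    using assms(8) unfolding market_equilibrium_def by auto
  have ccX: "CC G C a r i (X i)" if "i \<in> A" for i
    using opt[OF that] unfolding OB_optimal_def OB_feasible_def by auto
  have budX: "(\<Sum>j\<in>G. p j * X i j) \<le> m i" if "i \<in> A" for i
    using opt[OF that] unfolding OB_optimal_def OB_feasible_def by auto
  have optX: "(\<Sum>j\<in>G. d i j * X i j) \<le> (\<Sum>j\<in>G. d i j * y j)"
    if "i \<in> A" "OB_feasible G C a r m i p y" for i y
    using opt[OF that(1)] that(2) unfolding OB_optimal_def by auto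
  have better: "\<exists>y. CC G C a r i y \<and> (\<Sum>j\<in>G. d i j * y j) < (\<Sum>j\<in>G. d i j * X i j)" if i: "i \<in> A" for i
  proof -
    have le1: "X i j \<le> 1" if "j \<in> G" for j
    proof -
      have "X i j \<le> (\<Sum>i'\<in>A. X i' j)"
        using fA i ccX that by (intro member_le_sum) (auto simp: CC_def)
      thus ?thesis using sr that unfolding supply_respecting_def by fastforce
    qed
    have "\<not> CC_optimal G C a r d i (X i)"
      using assms(7) i le1 unfolding sufficient_demand_def by force
    thus ?thesis using ccX[OF i] unfolding CC_optimal_def by (auto simp: not_le)
  qed
  have part2: "(\<Sum>j\<in>G. p j * X i j) = m i" if i: "i \<in> A" for i
  proof (rule ccontr)
    assume "(\<Sum>j\<in>G. p j * X i j) \<noteq> m i"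
    with budX[OF i] have slack: "(\<Sum>j\<in>G. p j * X i j) < m i" by simp
    obtain y where y: "CC G C a r i y" "(\<Sum>j\<in>G. d i j * y j) < (\<Sum>j\<in>G. d i j * X i j)"
      using better[OF i] by blast
    define s where "s = m i - (\<Sum>j\<in>G. p j * X i j)"
    define D where "D = (\<Sum>j\<in>G. p j * y j) - (\<Sum>j\<in>G. p j * X i j)"
    define t where "t = (if D \<le> 0 then 1 else min 1 (s / D))"
    have s0: "s > 0" using slack s_def by simp
    have t0: "0 < t" "t \<le> 1" unfolding t_def using s0 by auto
    have tD: "t * D \<le> s"
    proof (cases "D \<le> 0")
      case True thus ?thesis using s0 t0 unfolding t_def by (simp add: mult_nonneg_nonpos order_less_imp_le)
    next
      case False
      hence "t \<le> s / D" unfolding t_def by simp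
      thus ?thesis using False by (simp add: pos_le_divide_eq mult.commute)
    qed
    define z where "z j = X i j + t * (y j - X i j)" for j
    have ccz: "CC G C a r i z"
      unfolding CC_def
    proof (intro conjI ballI)
      fix k assume k: "k \<in> C"
      have h1: "(\<Sum>j\<in>G. a i j k * X i j) \<ge> r i k" using ccX[OF i] k unfolding CC_def by auto
      have h2: "(\<Sum>j\<in>G. a i j k * y j) \<ge> r i k" using y(1) k unfolding CC_def by auto
      have "(\<Sum>j\<in>G. a i j k * z j) = (1 - t) * (\<Sum>j\<in>G. a i j k * X i j) + t * (\<Sum>j\<in>G. a i j k * y j)"
        unfolding z_def sum_comb by (simp add: algebra_simps)
      also have "\<dots> \<ge> (1 - t) * r i k + t * r i k"
        using h1 h2 t0 by (intro add_mono mult_left_mono) auto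
      finally show "(\<Sum>j\<in>G. a i j k * z j) \<ge> r i k" by (simp add: algebra_simps)
    next
      fix j assume j: "j \<in> G"
      have "X i j \<ge> 0" "y j \<ge> 0" using ccX[OF i] y(1) j unfolding CC_def by auto
      hence "0 \<le> (1 - t) * X i j + t * y j" using t0 by simp
      thus "z j \<ge> 0" unfolding z_def by (simp add: algebra_simps)
    qed
    have "(\<Sum>j\<in>G. p j * z j) = (\<Sum>j\<in>G. p j * X i j) + t * D"
      unfolding z_def sum_comb D_def ..
    also have "\<dots> \<le> m i" using tD s_def by simp
    finally have "OB_feasible G C a r m i p z" using ccz unfolding OB_feasible_def by simp
    from optX[OF i this] have "(\<Sum>j\<in>G. d i j * X i j) \<le> (\<Sum>j\<in>G. d i j * z j)" .
    also have "(\<Sum>j\<in>G. d i j * z j) = (\<Sum>j\<in>G. d i j * X i j) + t * ((\<Sum>j\<in>G. d i j * y j) - (\<Sum>j\<in>G. d i j * X i j))"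
      unfolding z_def sum_comb ..
    finally have "0 \<le> t * ((\<Sum>j\<in>G. d i j * y j) - (\<Sum>j\<in>G. d i j * X i j))" by simp
    moreover have "t * ((\<Sum>j\<in>G. d i j * y j) - (\<Sum>j\<in>G. d i j * X i j)) < 0"
      using t0 y(2) by (simp add: mult_pos_neg)
    ultimately show False by simp
  qed
  have part1: "\<gamma> > 0" if i: "i \<in> A" and dopt: "dual_optimal G C a r d m i p \<beta> \<gamma>" for i \<beta> \<gamma>
  proof -
    have df: "dual_feasible G C a d i p \<beta> \<gamma>"
      and dmax: "\<And>\<beta>' \<gamma>'. dual_feasible G C a d i p \<beta>' \<gamma>' \<Longrightarrow> dual_obj C r m i \<beta>' \<gamma>' \<le> dual_obj C r m i \<beta> \<gamma>"
      using dopt unfolding dual_optimal_def by auto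
    show "\<gamma> > 0"
    proof (rule ccontr)
      assume "\<not> \<gamma> > 0"
      with df have g0: "\<gamma> = 0" unfolding dual_feasible_def by auto
      obtain y where y: "CC G C a r i y" "(\<Sum>j\<in>G. d i j * y j) < (\<Sum>j\<in>G. d i j * X i j)"
        using better[OF i] by blast
      define w where "w = (\<Sum>j\<in>G. d i j * y j)"
      have weak: "dual_obj C r m i \<beta> \<gamma> \<le> w"
      proof -
        have "dual_obj C r m i \<beta> \<gamma> = (\<Sum>k\<in>C. r i k * \<beta> k)" unfolding dual_obj_def g0 by simp
        also have "\<dots> \<le> (\<Sum>k\<in>C. (\<Sum>j\<in>G. a i j k * y j) * \<beta> k)"
          using y(1) df unfolding CC_def dual_feasible_def by (intro sum_mono mult_right_mono) auto
        also have "\<dots> = (\<Sum>j\<in>G. y j * (\<Sum>k\<in>C. a i j k * \<beta> k))"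
          by (simp add: sum_distrib_left sum_distrib_right sum.swap[of _ C G] algebra_simps)
        also have "\<dots> \<le> (\<Sum>j\<in>G. y j * d i j)"
          using y(1) df g0 unfolding CC_def dual_feasible_def by (intro sum_mono mult_left_mono) auto
        finally show ?thesis unfolding w_def by (simp add: mult.commute)
      qed
      define RS where "RS = Cov ` C \<union> Nng ` G \<union> {Bud, Obj}"
      define Ar :: "('c,'g) row \<Rightarrow> 'g \<Rightarrow> real" where
        "Ar \<rho> j = (case \<rho> of Cov k \<Rightarrow> a i j k | Nng j' \<Rightarrow> (if j = j' then 1 else 0) | Bud \<Rightarrow> - p j | Obj \<Rightarrow> - d i j)" for \<rho> j
      define br :: "('c,'g) row \<Rightarrow> real" where
        "br \<rho> = (case \<rho> of Cov k \<Rightarrow> r i k | Nng j' \<Rightarrow> 0 | Bud \<Rightarrow> - m i | Obj \<Rightarrow> - w)" for \<rho>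
      define AI :: "('c,'g) row idx \<Rightarrow> 'g \<Rightarrow> real" where
        "AI \<iota> = (case \<iota> of Leaf \<rho> \<Rightarrow> Ar \<rho> | _ \<Rightarrow> (\<lambda>_. 0))" for \<iota>
      define bI :: "('c,'g) row idx \<Rightarrow> real" where
        "bI \<iota> = (case \<iota> of Leaf \<rho> \<Rightarrow> br \<rho> | _ \<Rightarrow> 0)" for \<iota>
      have fRS: "finite RS" unfolding RS_def using fC fG by auto
      have sCov: "(\<Sum>j\<in>G. Ar (Cov k) j * z j) = (\<Sum>j\<in>G. a i j k * z j)" for k z
        unfolding Ar_def by simp
      have sNng: "(\<Sum>j\<in>G. Ar (Nng j') j * z j) = z j'" if "j' \<in> G" for j' z
        unfolding Ar_def using that fG by (simp add: mult_if_delta sum.delta')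
      have sBud: "(\<Sum>j\<in>G. Ar Bud j * z j) = - (\<Sum>j\<in>G. p j * z j)" for z
        unfolding Ar_def by (simp add: sum_negf)
      have sObj: "(\<Sum>j\<in>G. Ar Obj j * z j) = - (\<Sum>j\<in>G. d i j * z j)" for z
        unfolding Ar_def by (simp add: sum_negf)
      have infeas: "\<not>(\<exists>z. \<forall>\<iota>\<in>Leaf ` RS. (\<Sum>j\<in>G. AI \<iota> j * z j) \<ge> bI \<iota>)"
      proof
        assume "\<exists>z. \<forall>\<iota>\<in>Leaf ` RS. (\<Sum>j\<in>G. AI \<iota> j * z j) \<ge> bI \<iota>"
        then obtain z where z: "\<forall>\<rho>\<in>RS. (\<Sum>j\<in>G. Ar \<rho> j * z j) \<ge> br \<rho>"
          unfolding AI_def bI_def by auto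
        have "CC G C a r i z" unfolding CC_def
        proof (intro conjI ballI)
          fix k assume "k \<in> C"
          thus "(\<Sum>j\<in>G. a i j k * z j) \<ge> r i k"
            using z[rule_format, of "Cov k"] unfolding RS_def sCov br_def by auto
        next
          fix j assume "j \<in> G"
          thus "z j \<ge> 0"
            using z[rule_format, of "Nng j"] unfolding RS_def br_def by (auto simp: sNng)
        qed
        moreover have "(\<Sum>j\<in>G. p j * z j) \<le> m i"
          using z[rule_format, of Bud] unfolding RS_def sBud br_def by auto
        ultimately have "OB_feasible G C a r m i p z" unfolding OB_feasible_def by simp
        from optX[OF i this] have "(\<Sum>j\<in>G. d i j * X i j) \<le> (\<Sum>j\<in>G. d i j * z j)" .
        moreover have "(\<Sum>j\<in>G. d i j * z j) \<le> w"
          using z[rule_format, of Obj] unfolding RS_def sObj br_def by auto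
        ultimately show False using y(2) unfolding w_def by simp
      qed
      obtain l where l: "\<forall>\<iota>\<in>Leaf ` RS. l \<iota> \<ge> 0" "\<forall>j\<in>G. (\<Sum>\<iota>\<in>Leaf ` RS. l \<iota> * AI \<iota> j) = 0"
           "(\<Sum>\<iota>\<in>Leaf ` RS. l \<iota> * bI \<iota>) > 0"
        using farkas_fm[OF fG _ infeas] fRS by blast
      define L where "L \<rho> = l (Leaf \<rho>)" for \<rho>
      have L0: "L \<rho> \<ge> 0" if "\<rho> \<in> RS" for \<rho> using l(1) that unfolding L_def by auto
      have reA: "(\<Sum>\<iota>\<in>Leaf ` RS. l \<iota> * AI \<iota> j) = (\<Sum>\<rho>\<in>RS. L \<rho> * Ar \<rho> j)" for j
        by (subst sum.reindex) (auto simp: inj_on_def L_def AI_def)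
      have reb: "(\<Sum>\<iota>\<in>Leaf ` RS. l \<iota> * bI \<iota>) = (\<Sum>\<rho>\<in>RS. L \<rho> * br \<rho>)"
        by (subst sum.reindex) (auto simp: inj_on_def L_def bI_def)
      have coord: "(\<Sum>k\<in>C. L (Cov k) * a i j k) + L (Nng j) - L Bud * p j - L Obj * d i j = 0"
        if j: "j \<in> G" for j
      proof -
        have "(\<Sum>\<rho>\<in>RS. L \<rho> * Ar \<rho> j) = 0" using l(2) j reA by simp
        moreover have "(\<Sum>j'\<in>G. L (Nng j') * Ar (Nng j') j) = L (Nng j)"
        proof -
          have "(\<Sum>j'\<in>G. L (Nng j') * Ar (Nng j') j) = (\<Sum>j'\<in>G. if j = j' then L (Nng j') else 0)"
            unfolding Ar_def by (intro sum.cong refl) auto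
          thus ?thesis using j fG by (simp add: sum.delta)
        qed
        ultimately show ?thesis unfolding RS_def row_sum[OF fC fG] by (simp add: Ar_def)
      qed
      have bpos: "(\<Sum>k\<in>C. L (Cov k) * r i k) - L Bud * m i - L Obj * w > 0"
      proof -
        have "0 < (\<Sum>\<rho>\<in>RS. L \<rho> * br \<rho>)" using l(3) reb by simp
        thus ?thesis unfolding RS_def row_sum[OF fC fG] by (simp add: br_def)
      qed
      have LO: "L Obj \<ge> 0" "L Bud \<ge> 0" using L0 unfolding RS_def by auto
      show False
      proof (cases "L Obj = 0")
        case True
        have "(\<Sum>\<iota>\<in>Leaf ` RS. l \<iota> * bI \<iota>) \<le> 0"
        proof (rule weak_farkas[where x = "X i"])
          show "finite (Leaf ` RS)" using fRS by simp
          show "finite G" by fact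
          show "\<forall>j\<in>G. (\<Sum>\<iota>\<in>Leaf ` RS. l \<iota> * AI \<iota> j) = 0" by (rule l(2))
          show "\<forall>\<iota>\<in>Leaf ` RS. 0 \<le> l \<iota> \<and> (l \<iota> \<noteq> 0 \<longrightarrow> bI \<iota> \<le> (\<Sum>j\<in>G. AI \<iota> j * X i j))"
          proof
            fix \<iota> assume "\<iota> \<in> Leaf ` RS"
            then obtain \<rho> where \<rho>: "\<rho> \<in> RS" "\<iota> = Leaf \<rho>" by auto
            have "l \<iota> \<noteq> 0 \<Longrightarrow> br \<rho> \<le> (\<Sum>j\<in>G. Ar \<rho> j * X i j)"
            proof -
              assume ne: "l \<iota> \<noteq> 0"
              have "\<rho> \<in> Cov ` C \<or> \<rho> \<in> Nng ` G \<or> \<rho> = Bud \<or> \<rho> = Obj" using \<rho> RS_def by auto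
              moreover have "\<rho> \<noteq> Obj" using ne True \<rho> unfolding L_def by auto
              ultimately show ?thesis
                using ccX[OF i] budX[OF i]
                by (auto simp: sCov sNng sBud br_def CC_def)
            qed
            thus "0 \<le> l \<iota> \<and> (l \<iota> \<noteq> 0 \<longrightarrow> bI \<iota> \<le> (\<Sum>j\<in>G. AI \<iota> j * X i j))"
              using l(1) \<rho> \<open>\<iota> \<in> Leaf ` RS\<close> unfolding AI_def bI_def by auto
          qed
        qed
        thus False using l(3) by simp
      next
        case False
        hence mu: "L Obj > 0" using LO by simp
        define \<beta>' where "\<beta>' k = L (Cov k) / L Obj" for k
        define \<gamma>' where "\<gamma>' = L Bud / L Obj"
        have "dual_feasible G C a d i p \<beta>' \<gamma>'" unfolding dual_feasible_def
        proof (intro conjI ballI)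
          fix k assume "k \<in> C" thus "\<beta>' k \<ge> 0" using L0 mu unfolding \<beta>'_def RS_def by auto
        next
          show "\<gamma>' \<ge> 0" using LO mu unfolding \<gamma>'_def by auto
        next
          fix j assume j: "j \<in> G"
          have "L (Nng j) \<ge> 0" using L0 j unfolding RS_def by auto
          have "(\<Sum>k\<in>C. a i j k * \<beta>' k) - \<gamma>' * p j = ((\<Sum>k\<in>C. L (Cov k) * a i j k) - L Bud * p j) / L Obj"
            unfolding \<beta>'_def \<gamma>'_def by (simp add: sum_divide_distrib[symmetric] diff_divide_distrib mult.commute)
          also have "\<dots> = (L Obj * d i j - L (Nng j)) / L Obj"
            using coord[OF j] by (simp add: algebra_simps)
          also have "\<dots> \<le> d i j" using mu \<open>L (Nng j) \<ge> 0\<close> by (simp add: divide_simps)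
          finally show "d i j \<ge> (\<Sum>k\<in>C. a i j k * \<beta>' k) - \<gamma>' * p j" .
        qed
        from dmax[OF this] have "dual_obj C r m i \<beta>' \<gamma>' \<le> w" using weak by simp
        moreover have "dual_obj C r m i \<beta>' \<gamma>' = ((\<Sum>k\<in>C. L (Cov k) * r i k) - L Bud * m i) / L Obj"
          unfolding dual_obj_def \<beta>'_def \<gamma>'_def
          by (simp add: sum_divide_distrib[symmetric] diff_divide_distrib mult.commute)
        moreover have "((\<Sum>k\<in>C. L (Cov k) * r i k) - L Bud * m i) / L Obj > w"
          using bpos mu by (simp add: divide_simps mult.commute)
        ultimately show False by simp
      qed
    qed
  qed
  show ?thesis using part1 part2 by blast
qed

end
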